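(* Let $A$ and $B$ be C$^*$-algebras, where $A$ is unital with unit $1$. Suppose $T:A\to B$ is a linear map such that for all $a,b\in A$, $ab^*=1$ implies $T(a)T(b)^*=T(1)$. Then $T$ is continuous and $T(1)T(a)=T(a)$ for every $a\in A$. Furthermore, if $T$ is a $^*$-homomorphism at the unit of $A$, then $T$ is continuous and $T(a)T(1)=T(1)T(a)=T(a)$ for every $a\in A$.
   Context: A map $T:A\to B$ between C$^*$-algebras is a $^*$-homomorphism at $z\in A$ if for all $a,b\in A$ with $ab^*=z$ one has $T(ab^* )=T(a)T(b)^*=T(z)$, and for all $c,d\in A$ with $c^*d=z$ one has $T(c^*d)=T(c)^*T(d)=T(z)$. *)

theory Defs
  imports "HOL-Analysis.Analysis"
begin

class scaleC =
  fixes scaleC :: "complex \<Rightarrow> 'a \<Rightarrow> 'a" (infixr \<open>*\<^sub>C\<close> 75)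

class complex_vector = scaleC + real_vector +
  assumes scaleC_add_right: "a *\<^sub>C (x + y) = a *\<^sub>C x + a *\<^sub>C y"
    and scaleC_add_left: "(a + b) *\<^sub>C x = a *\<^sub>C x + b *\<^sub>C x"
    and scaleC_scaleC: "a *\<^sub>C (b *\<^sub>C x) = (a * b) *\<^sub>C x"
    and scaleC_one: "1 *\<^sub>C x = x"
    and scaleR_scaleC: "scaleR r x = (complex_of_real r) *\<^sub>C x"

class complex_normed_vector = complex_vector + real_normed_vector +
  assumes norm_scaleC: "norm (a *\<^sub>C x) = cmod a * norm x"

class complex_algebra = complex_vector + ring +
  assumes mult_scaleC_left: "(a *\<^sub>C x) * y = a *\<^sub>C (x * y)"
    and mult_scaleC_right: "x * (a *\<^sub>C y) = a *\<^sub>C (x * y)"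

class complex_normed_algebra = complex_normed_vector + complex_algebra + real_normed_algebra

class cstar_algebra = complex_normed_algebra + complete_space +
  fixes adj :: "'a \<Rightarrow> 'a"
  assumes adj_add: "adj (x + y) = adj x + adj y"
    and adj_scaleC: "adj (a *\<^sub>C x) = cnj a *\<^sub>C adj x"
    and adj_mult: "adj (x * y) = adj y * adj x"
    and adj_adj: "adj (adj x) = x"
    and cstar_identity: "norm (adj x * x) = norm x * norm x"

definition clinear :: "('a::complex_vector \<Rightarrow> 'b::complex_vector) \<Rightarrow> bool" where
  "clinear T \<longleftrightarrow> (\<forall>x y. T (x + y) = T x + T y) \<and> (\<forall>c x. T (c *\<^sub>C x) = c *\<^sub>C T x)"

definition star_hom_at :: "('a::cstar_algebra \<Rightarrow> 'b::cstar_algebra) \<Rightarrow> 'a \<Rightarrow> bool" where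
  "star_hom_at T z \<longleftrightarrow>
     (\<forall>a b. a * adj b = z \<longrightarrow> T (a * adj b) = T a * adj (T b) \<and> T a * adj (T b) = T z) \<and>
     (\<forall>c d. adj c * d = z \<longrightarrow> T (adj c * d) = adj (T c) * T d \<and> adj (T c) * T d = T z)"

end

theory Submission imports Defs begin

lemma scaleC_real: "(complex_of_real r) *\<^sub>C (x::'a::complex_vector) = r *\<^sub>R x"
  by (simp add: scaleR_scaleC)

lemma scaleC_zero_left[simp]: "0 *\<^sub>C (x::'a::complex_vector) = 0"
  by (metis scaleC_real of_real_0 scale_zero_left)

lemma scaleC_zero_right[simp]: "a *\<^sub>C (0::'a::complex_vector) = 0"
  by (metis add_cancel_right_right scaleC_add_right)

lemma adj_zero[simp]: "adj (0::'a::cstar_algebra) = 0"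
  by (metis add_cancel_right_right adj_add)

lemma adj_minus: "adj (- x) = - adj (x::'a::cstar_algebra)"
  by (metis add.right_inverse adj_add adj_zero add_eq_0_iff)

lemma adj_diff: "adj (x - y) = adj x - adj (y::'a::cstar_algebra)"
  by (simp only: diff_conv_add_uminus adj_add adj_minus)

lemma adj_scaleR: "adj (r *\<^sub>R x) = r *\<^sub>R adj (x::'a::cstar_algebra)"
  by (metis adj_scaleC complex_cnj_complex_of_real scaleC_real)

lemma norm_adj_le: "norm (adj x) \<le> norm (x::'a::cstar_algebra)"
proof -
  have "norm (adj x) * norm (adj x) = norm (adj (adj x) * adj x)" by (simp add: cstar_identity)
  also have "\<dots> \<le> norm x * norm (adj x)" using norm_mult_ineq[of x "adj x"] by (simp add: adj_adj)
  finally show ?thesis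
    by (metis mult_le_cancel_right norm_ge_zero order.strict_iff_not mult_eq_0_iff order_refl dual_order.trans)
qed

lemma norm_adj[simp]: "norm (adj x) = norm (x::'a::cstar_algebra)"
  by (metis adj_adj antisym norm_adj_le)

lemma zero_of_mult_adj: "x * adj x = 0 \<Longrightarrow> x = (0::'a::cstar_algebra)"
  by (metis adj_adj cstar_identity norm_adj norm_eq_zero norm_zero mult_eq_0_iff)

lemma adj_one[simp]: "adj (1::'a::{cstar_algebra,ring_1}) = 1"
  by (metis adj_adj adj_mult mult_1_left mult_1_right)

lemma bounded_linear_adj: "bounded_linear (adj :: 'a::cstar_algebra \<Rightarrow> 'a)"
  by (rule bounded_linear_intro[where K=1]) (auto simp: adj_add adj_scaleR)

lemma continuous_on_adj: "continuous_on S (adj :: 'a::cstar_algebra \<Rightarrow> 'a)"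
  using bounded_linear_adj linear_continuous_on by blast


lemma fixpoint_exists:
  fixes x :: "'a::{cstar_algebra,ring_1}"
  assumes sa: "adj x = x" and nx: "norm x \<le> 1/2"
  shows "\<exists>z. adj z = z \<and> z * x = x * z \<and> z + z = x * x + z * z"
proof -
  define S where "S = {z::'a. norm z \<le> 1/2 \<and> adj z = z \<and> z * x = x * z}"
  define f where "f z = (1/2::real) *\<^sub>R (x * x + z * z)" for z
  have cl: "closed S" unfolding S_def
    by (intro closed_Collect_conj closed_Collect_le closed_Collect_eq continuous_intros continuous_on_adj)
  have "complete S" using cl complete_eq_closed by blast
  moreover have "S \<noteq> {}" proof - have "0 \<in> S" unfolding S_def by simp thus ?thesis by blast qed
  moreover have "f ` S \<subseteq> S"
  proof
    fix w assume "w \<in> f ` S"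
    then obtain z where z: "z \<in> S" "w = f z" by auto
    have "norm (x*x + z*z) \<le> norm x * norm x + norm z * norm z"
      by (rule norm_triangle_le, rule add_mono, rule norm_mult_ineq, rule norm_mult_ineq)
    also have "\<dots> \<le> 1/2 * (1/2) + 1/2 * (1/2)"
      using z nx unfolding S_def by (intro add_mono mult_mono) auto
    finally have n: "norm (f z) \<le> 1/2" unfolding f_def by simp
    have a: "adj (f z) = f z" using z sa unfolding S_def f_def by (simp add: adj_scaleR adj_add adj_mult)
    have zx: "z * x = x * z" using z unfolding S_def by simp
    have zzx: "z * (z * x) = x * (z * z)"
    proof -
      have "z * (z * x) = z * (x * z)" by (simp only: zx)
      also have "\<dots> = (z * x) * z" by (simp only: mult.assoc)
      also have "\<dots> = (x * z) * z" by (simp only: zx)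
      also have "\<dots> = x * (z * z)" by (simp only: mult.assoc)
      finally show ?thesis .
    qed
    have c: "f z * x = x * f z" unfolding f_def
      by (simp only: scaleR_left_commute mult_scaleR_left mult_scaleR_right distrib_left distrib_right mult.assoc zzx)
    show "w \<in> S" using n a c z unfolding S_def by simp
  qed
  moreover have "dist (f z) (f w) \<le> 1/2 * dist z w" if "z \<in> S" "w \<in> S" for z w
  proof -
    have e: "f z - f w = (1/2::real) *\<^sub>R (z * (z - w) + (z - w) * w)"
    proof -
      have "f z - f w = (1/2::real) *\<^sub>R ((x * x + z * z) - (x * x + w * w))"
        unfolding f_def by (simp only: scaleR_diff_right)
      also have "(x * x + z * z) - (x * x + w * w) = z * (z - w) + (z - w) * w"
        by (simp add: algebra_simps)
      finally show ?thesis .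
    qed
    have "norm (z * (z - w) + (z - w) * w) \<le> norm z * norm (z - w) + norm (z - w) * norm w"
      by (rule norm_triangle_le, rule add_mono, rule norm_mult_ineq, rule norm_mult_ineq)
    also have "\<dots> \<le> 1/2 * norm (z - w) + norm (z - w) * (1/2)"
      using that unfolding S_def by (intro add_mono mult_mono) auto
    finally show ?thesis unfolding dist_norm e by simp
  qed
  ultimately obtain z where "z \<in> S" "f z = z" using Banach_fix[of S "1/2" f] by auto
  moreover have "z + z = x * x + z * z"
  proof -
    have "z + z = (2::real) *\<^sub>R z" by (simp add: scaleR_2)
    also have "\<dots> = (2::real) *\<^sub>R f z" using \<open>f z = z\<close> by simp
    also have "\<dots> = x * x + z * z" unfolding f_def by simp
    finally show ?thesis .
  qed
  ultimately have "adj z = z \<and> z * x = x * z \<and> z + z = x * x + z * z"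
    unfolding S_def by auto
  thus ?thesis by blast
qed


lemma scaleC_minus_left: "(- c) *\<^sub>C (x::'a::complex_vector) = - (c *\<^sub>C x)"
  by (metis add_eq_0_iff neg_equal_iff_equal add.right_inverse scaleC_add_left scaleC_zero_left)

lemma scaleC_minus_right: "c *\<^sub>C (- x::'a::complex_vector) = - (c *\<^sub>C x)"
  by (metis add.right_inverse add_eq_0_iff scaleC_add_right scaleC_zero_right)

lemma scaleC_diff_right: "c *\<^sub>C (x - y::'a::complex_vector) = c *\<^sub>C x - c *\<^sub>C y"
  by (simp only: diff_conv_add_uminus scaleC_add_right scaleC_minus_right)

definition unitary :: "'a::{cstar_algebra,ring_1} \<Rightarrow> bool" where
  "unitary u \<longleftrightarrow> u * adj u = 1 \<and> adj u * u = 1"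

lemma unitary_adj: "unitary u \<Longrightarrow> unitary (adj u)"
  by (simp add: unitary_def adj_adj)

lemma unitary_one: "unitary (1::'a::{cstar_algebra,ring_1})"
  by (simp add: unitary_def)

lemma prod_one_aux:
  fixes x s :: "'a::{cstar_algebra,ring_1}"
  assumes "s * x = x * s" "x * x + s * s = 1" "c * d = 1" "c + d = 0"
  shows "(x + c *\<^sub>C s) * (x + d *\<^sub>C s) = 1"
proof -
  have "(x + c *\<^sub>C s) * (x + d *\<^sub>C s) = x * x + (d *\<^sub>C (x * s) + c *\<^sub>C (s * x)) + (d * c) *\<^sub>C (s * s)"
    by (simp add: algebra_simps mult_scaleC_left mult_scaleC_right scaleC_scaleC scaleC_add_right)
  also have "d *\<^sub>C (x * s) + c *\<^sub>C (s * x) = 0"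
    using assms(1,4) by (metis scaleC_add_left scaleC_zero_left add.commute)
  finally show ?thesis using assms(2,3) by (simp add: scaleC_one mult.commute)
qed

lemma sa_small_unitary:
  fixes x :: "'a::{cstar_algebra,ring_1}"
  assumes sa: "adj x = x" and nx: "norm x \<le> 1/2"
  shows "\<exists>u. unitary u \<and> x = (1/2::real) *\<^sub>R (u + adj u)"
proof -
  obtain z where z: "adj z = z" "z * x = x * z" "z + z = x * x + z * z"
    using fixpoint_exists[OF sa nx] by blast
  define s where "s = 1 - z"
  have ss: "s * x = x * s" unfolding s_def using z(2) by (simp add: algebra_simps)
  have s2: "x * x + s * s = 1" unfolding s_def using z(3)
    by (simp add: algebra_simps)
  have as: "adj s = s" unfolding s_def using z(1) by (simp add: adj_diff)
  define u where "u = x + \<i> *\<^sub>C s"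
  have au: "adj u = x + (- \<i>) *\<^sub>C s" unfolding u_def by (simp only: adj_add adj_scaleC sa as complex_cnj_i)
  have "u * adj u = 1" unfolding au unfolding u_def by (rule prod_one_aux[OF ss s2]) auto
  moreover have "adj u * u = 1" unfolding au unfolding u_def by (rule prod_one_aux[OF ss s2]) auto
  ultimately have "unitary u" by (simp add: unitary_def)
  moreover have "u + adj u = x + x"
  proof -
    have "u + adj u = x + x + (\<i> *\<^sub>C s + (- \<i>) *\<^sub>C s)" unfolding au unfolding u_def by (simp add: algebra_simps)
    also have "\<i> *\<^sub>C s + (- \<i>) *\<^sub>C s = 0" by (metis scaleC_add_left scaleC_zero_left add.right_inverse)
    finally show ?thesis by simp
  qed
  hence "x = (1/2::real) *\<^sub>R (u + adj u)" by (simp add: scaleR_2[symmetric] del: scaleR_2)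
  ultimately show ?thesis by blast
qed

lemma sa_unitary:
  fixes x :: "'a::{cstar_algebra,ring_1}"
  assumes sa: "adj x = x"
  shows "\<exists>u. unitary u \<and> x = norm x *\<^sub>R (u + adj u)"
proof (cases "x = 0")
  case True thus ?thesis using unitary_one by auto
next
  case False
  define x' where "x' = (1 / (2 * norm x)) *\<^sub>R x"
  have "adj x' = x'" unfolding x'_def using sa by (simp add: adj_scaleR)
  moreover have "norm x' \<le> 1/2" unfolding x'_def using False by simp
  ultimately obtain u where u: "unitary u" "x' = (1/2::real) *\<^sub>R (u + adj u)"
    using sa_small_unitary by blast
  have "x = (2 * norm x) *\<^sub>R x'" unfolding x'_def using False by simp
  also have "\<dots> = norm x *\<^sub>R (u + adj u)" using u(2) by simp
  finally show ?thesis using u(1) by blast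
qed



lemma decomp:
  fixes a :: "'a::{cstar_algebra,ring_1}"
  shows "\<exists>u v r t. unitary u \<and> unitary v \<and> 0 \<le> r \<and> r \<le> norm a \<and> 0 \<le> t \<and> t \<le> norm a \<and>
     a = r *\<^sub>R (u + adj u) + \<i> *\<^sub>C (t *\<^sub>R (v + adj v))"
proof -
  define h where "h = (1/2::real) *\<^sub>R (a + adj a)"
  define k where "k = (- \<i> / 2) *\<^sub>C (a - adj a)"
  have ah: "adj h = h" unfolding h_def by (simp add: adj_scaleR adj_add adj_adj add.commute)
  have ak: "adj k = k"
  proof -
    have "adj k = (\<i> / 2) *\<^sub>C (adj a - a)" unfolding k_def by (simp add: adj_scaleC adj_diff adj_adj)
    also have "\<dots> = (- \<i> / 2) *\<^sub>C (a - adj a)"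
      by (metis minus_diff_eq scaleC_minus_left scaleC_minus_right minus_divide_left minus_minus)
    finally show ?thesis unfolding k_def .
  qed
  have nh: "norm h \<le> norm a"
  proof -
    have "norm (a + adj a) \<le> norm a + norm a" using norm_triangle_ineq[of a "adj a"] by simp
    thus ?thesis unfolding h_def by simp
  qed
  have nk: "norm k \<le> norm a"
  proof -
    have "norm (a - adj a) \<le> norm a + norm a" using norm_triangle_ineq4[of a "adj a"] by simp
    moreover have "cmod (- \<i> / 2) = 1/2" by (simp add: norm_divide)
    ultimately show ?thesis unfolding k_def by (simp add: norm_scaleC)
  qed
  have "\<i> *\<^sub>C k = (1/2::real) *\<^sub>R (a - adj a)"
    unfolding k_def by (simp add: scaleC_scaleC scaleR_scaleC)
  hence eq: "a = h + \<i> *\<^sub>C k" unfolding h_def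
    by (simp add: scaleR_add_right[symmetric] scaleR_diff_right[symmetric] del: scaleR_add_right scaleR_diff_right)
  obtain u where u: "unitary u" "h = norm h *\<^sub>R (u + adj u)" using sa_unitary[OF ah] by blast
  obtain v where v: "unitary v" "k = norm k *\<^sub>R (v + adj v)" using sa_unitary[OF ak] by blast
  show ?thesis
    by (rule exI[of _ u], rule exI[of _ v], rule exI[of _ "norm h"], rule exI[of _ "norm k"])
       (use u v nh nk eq in auto)
qed


lemma clinear_facts:
  assumes "clinear T"
  shows "T (x + y) = T x + T y" "T (c *\<^sub>C x) = c *\<^sub>C T x" "T (r *\<^sub>R x) = r *\<^sub>R T x"
  using assms unfolding clinear_def by (auto simp: scaleR_scaleC)

lemma T_decomp:
  fixes T :: "'a::{cstar_algebra,ring_1} \<Rightarrow> 'b::cstar_algebra"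
  assumes lin: "clinear T"
  shows "\<exists>u v r t. unitary u \<and> unitary v \<and> 0 \<le> r \<and> r \<le> norm a \<and> 0 \<le> t \<and> t \<le> norm a \<and>
     T a = r *\<^sub>R (T u + T (adj u)) + \<i> *\<^sub>C (t *\<^sub>R (T v + T (adj v)))"
  using decomp[of a] clinear_facts[OF lin] by metis

lemma left_unit:
  fixes T :: "'a::{cstar_algebra,ring_1} \<Rightarrow> 'b::cstar_algebra"
  assumes lin: "clinear T" and U: "\<And>w. unitary w \<Longrightarrow> p * T w = T w"
  shows "p * T a = T a"
proof -
  obtain u v r t where d: "unitary u" "unitary v"
     "T a = r *\<^sub>R (T u + T (adj u)) + \<i> *\<^sub>C (t *\<^sub>R (T v + T (adj v)))"
    using T_decomp[OF lin] by blast
  show ?thesis unfolding d(3)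
    by (simp add: distrib_left mult_scaleC_right U d(1,2) unitary_adj)
qed

lemma right_unit:
  fixes T :: "'a::{cstar_algebra,ring_1} \<Rightarrow> 'b::cstar_algebra"
  assumes lin: "clinear T" and U: "\<And>w. unitary w \<Longrightarrow> T w * p = T w"
  shows "T a * p = T a"
proof -
  obtain u v r t where d: "unitary u" "unitary v"
     "T a = r *\<^sub>R (T u + T (adj u)) + \<i> *\<^sub>C (t *\<^sub>R (T v + T (adj v)))"
    using T_decomp[OF lin] by blast
  show ?thesis unfolding d(3)
    by (simp add: distrib_right mult_scaleC_left U d(1,2) unitary_adj)
qed

lemma bounded_T:
  fixes T :: "'a::{cstar_algebra,ring_1} \<Rightarrow> 'b::cstar_algebra"
  assumes lin: "clinear T" and U: "\<And>w. unitary w \<Longrightarrow> norm (T w) \<le> 1"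
  shows "continuous_on UNIV T"
proof -
  have "norm (T a) \<le> norm a * 4" for a
  proof -
    obtain u v r t where d: "unitary u" "unitary v" "0 \<le> r" "r \<le> norm a" "0 \<le> t" "t \<le> norm a"
       "T a = r *\<^sub>R (T u + T (adj u)) + \<i> *\<^sub>C (t *\<^sub>R (T v + T (adj v)))"
      using T_decomp[OF lin] by blast
    have b1: "norm (T u + T (adj u)) \<le> 2" using U d(1) unitary_adj[OF d(1)]
      by (smt (verit) norm_triangle_ineq)
    have b2: "norm (T v + T (adj v)) \<le> 2" using U d(2) unitary_adj[OF d(2)]
      by (smt (verit) norm_triangle_ineq)
    have "norm (T a) \<le> norm (r *\<^sub>R (T u + T (adj u))) + norm (\<i> *\<^sub>C (t *\<^sub>R (T v + T (adj v))))"
      unfolding d(7) by (rule norm_triangle_ineq)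
    also have "\<dots> = r * norm (T u + T (adj u)) + t * norm (T v + T (adj v))"
      using d(3,5) by (simp add: norm_scaleC)
    also have "\<dots> \<le> norm a * 2 + norm a * 2"
      using d b1 b2 by (intro add_mono mult_mono) auto
    finally show ?thesis by simp
  qed
  hence "bounded_linear T"
    using clinear_facts[OF lin] by (intro bounded_linear_intro[where K=4]) auto
  thus ?thesis using linear_continuous_on by blast
qed

theorem proposition2p4:
  fixes T :: "'a::{cstar_algebra, ring_1} \<Rightarrow> 'b::cstar_algebra"
  assumes lin: "clinear T"
    and unit_pres: "\<forall>a b. a * adj b = 1 \<longrightarrow> T a * adj (T b) = T 1"
  shows "continuous_on UNIV T \<and> (\<forall>a. T 1 * T a = T a) \<and>
         (star_hom_at T 1 \<longrightarrow>
            continuous_on UNIV T \<and> (\<forall>a. T a * T 1 = T a \<and> T 1 * T a = T a))"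
proof -
  define p where "p = T 1"
  have pp': "p * adj p = p" using unit_pres unfolding p_def by (metis adj_one mult_1_left)
  have ap: "adj p = p" by (metis pp' adj_mult adj_adj)
  have pp: "p * p = p" using pp' ap by simp
  have np: "norm p \<le> 1"
  proof -
    have "norm p * norm p = norm p" using cstar_identity[of p] ap pp by simp
    thus ?thesis by (metis mult_cancel_left2 norm_ge_zero mult_eq_0_iff linorder_le_cases order.trans zero_le_one)
  qed
  have qq: "T w * adj (T w) = p" if "unitary w" for w
    using unit_pres that unfolding unitary_def p_def by blast
  have left: "p * T w = T w" if "unitary w" for w
  proof -
    let ?q = "T w"
    have "(?q - p * ?q) * adj (?q - p * ?q) = (?q - p * ?q) * (adj ?q - adj ?q * p)"
      by (simp add: adj_diff adj_mult ap)
    also have "\<dots> = ?q * adj ?q - (?q * adj ?q) * p - p * (?q * adj ?q) + p * (?q * adj ?q) * p"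
      by (simp add: algebra_simps)
    also have "\<dots> = 0" using qq[OF that] pp by simp
    finally show ?thesis using zero_of_mult_adj by fastforce
  qed
  have nq: "norm (T w) \<le> 1" if "unitary w" for w
  proof -
    have "norm (T w) * norm (T w) = norm p"
      using cstar_identity[of "adj (T w)"] qq[OF that] by (simp add: adj_adj)
    thus ?thesis using np
      by (metis less_le_not_le mult_le_cancel_left1 norm_ge_zero not_le order.trans)
  qed
  have cont: "continuous_on UNIV T" using bounded_T[OF lin nq] .
  have L: "\<forall>a. T 1 * T a = T a" using left_unit[OF lin left] unfolding p_def by blast
  have R: "T a * T 1 = T a" if sh: "star_hom_at T 1" for a
  proof -
    have qq2: "adj (T w) * T w = p" if "unitary w" for w
      using sh that unfolding star_hom_at_def unitary_def p_def by blast
    have "T w * p = T w" if "unitary w" for w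
    proof -
      let ?q = "T w"
      have "(adj ?q - p * adj ?q) * adj (adj ?q - p * adj ?q) = (adj ?q - p * adj ?q) * (?q - ?q * p)"
        by (simp add: adj_diff adj_mult ap adj_adj)
      also have "\<dots> = adj ?q * ?q - (adj ?q * ?q) * p - p * (adj ?q * ?q) + p * (adj ?q * ?q) * p"
        by (simp add: algebra_simps)
      also have "\<dots> = 0" using qq2[OF that] pp by simp
      finally have "adj ?q = p * adj ?q" using zero_of_mult_adj by fastforce
      hence "adj (adj ?q) = adj (p * adj ?q)" by simp
      thus ?thesis by (simp add: adj_adj adj_mult ap)
    qed
    thus ?thesis using right_unit[OF lin] unfolding p_def by blast
  qed
  show ?thesis using cont L R by blast
qed

end
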